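(* Let $\lambda>0$, $r\in(0,1)$, $U(w)=-e^{-\lambda w}$, and $\hat m_{\lambda,r}=\frac{r e^{\lambda}}{re^{\lambda}+1-r}$. For every $m\in[\hat m_{\lambda,r},1)$ and every $v\in[0,D(m)]$, if $X$ has distribution function $F_{m,v}$, then $\gamma=1$ maximizes $\mathbb E\,U(1+r+\gamma(X-r))$ over $\gamma\in[0,1]$; i.e. $\gamma^*_{\lambda,r}(m,v)=1$.
   Context: $D(m)=m-m^2$. For $0<v<D(m)$, $F_{m,v}$ is the distribution function of the Beta law with mean $m$ and variance $v$, i.e. Beta$(\alpha,\beta)$ with $\alpha=\frac{m(m-m^2-v)}{v}$, $\beta=\frac{(1-m)(m-m^2-v)}{v}$; $F_{m,0}$ is the distribution function of the Dirac mass at $m$; $F_{m,D(m)}(x)=1-m$ for $0\le x<1$ and $F_{m,D(m)}(1)=1$ (Bernoulli law with parameter $m$). Initial wealth is normalized to 1; $\gamma$ is the fraction invested in the risky return $X$, the rest earning the risk-free return $r$. *)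

theory Defs
  imports "HOL-Probability.Probability"
begin

definition D :: "real \<Rightarrow> real" where
  "D m = m - m^2"

definition beta_alpha :: "real \<Rightarrow> real \<Rightarrow> real" where
  "beta_alpha m v = m * (m - m^2 - v) / v"

definition beta_beta :: "real \<Rightarrow> real \<Rightarrow> real" where
  "beta_beta m v = (1 - m) * (m - m^2 - v) / v"

definition beta_density :: "real \<Rightarrow> real \<Rightarrow> real \<Rightarrow> real" where
  "beta_density a b x =
     (if 0 < x \<and> x < 1 then x powr (a - 1) * (1 - x) powr (b - 1) / Beta a b else 0)"

text \<open>The probability law whose distribution function is F_{m,v}:
  Dirac at m if v = 0, Bernoulli(m) on {0,1} if v = D m, and the Beta law with
  mean m and variance v if 0 < v < D m.\<close>
definition law_F :: "real \<Rightarrow> real \<Rightarrow> real measure" where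
  "law_F m v =
     (if v = 0 then return borel m
      else if v = D m then distr (measure_pmf (bernoulli_pmf m)) borel (\<lambda>b. if b then 1 else 0)
      else density lborel (beta_density (beta_alpha m v) (beta_beta m v)))"

definition U :: "real \<Rightarrow> real \<Rightarrow> real" where
  "U lam w = - exp (- lam * w)"

definition m_hat :: "real \<Rightarrow> real \<Rightarrow> real" where
  "m_hat lam r = r * exp lam / (r * exp lam + 1 - r)"

end

theory Submission imports Defs begin

lemma Beta_real_pos: assumes "a > 0" "b > (0::real)" shows "Beta a b > 0"
  using assms by (simp add: Beta_altdef rGamma_inverse_Gamma Gamma_real_pos)

lemma beta_density_meas[measurable]: "beta_density a b \<in> borel_measurable borel"
  unfolding beta_density_def by measurable

lemma beta_case:
  assumes m: "0 < m" "m < 1" and v: "0 < v" "v < D m"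
  defines "a \<equiv> beta_alpha m v" and "b \<equiv> beta_beta m v"
  shows "AE x in density lborel (\<lambda>x. ennreal (beta_density a b x)). 0 \<le> x \<and> x \<le> 1"
    and "integral\<^sup>L (density lborel (\<lambda>x. ennreal (beta_density a b x))) (\<lambda>x. x) = m"
proof -
  have pos: "m - m^2 - v > 0" using v by (simp add: D_def)
  have a: "a > 0" unfolding a_def beta_alpha_def using pos m v by simp
  have b: "b > 0" unfolding b_def beta_beta_def using pos m v by simp
  have ab: "a / (a + b) = m"
  proof -
    define K where "K = (m - m^2 - v) / v"
    have K: "K > 0" unfolding K_def using pos v by simp
    have "a = m * K" "b = (1 - m) * K" unfolding a_def b_def beta_alpha_def beta_beta_def K_def
      by simp_all
    then show ?thesis using K by (simp add: field_simps)
  qed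
  have B: "Beta a b > 0" using Beta_real_pos a b by blast
  show "AE x in density lborel (\<lambda>x. ennreal (beta_density a b x)). 0 \<le> x \<and> x \<le> 1"
    by (subst AE_density) (auto simp: beta_density_def)
  have nn: "beta_density a b x \<ge> 0" for x
    using B by (auto simp: beta_density_def)
  have "integral\<^sup>L (density lborel (\<lambda>x. ennreal (beta_density a b x))) (\<lambda>x. x)
     = (LINT x|lborel. beta_density a b x *\<^sub>R x)"
    by (rule integral_density) (auto simp: nn)
  also have "\<dots> = (LINT x|lborel. indicator {0..1} x *\<^sub>R (x powr ((a+1) - 1) * (1 - x) powr (b - 1)) / Beta a b)"
  proof (rule Bochner_Integration.integral_cong[OF refl])
    fix x :: real
    show "beta_density a b x *\<^sub>R x = indicator {0..1} x *\<^sub>R (x powr ((a+1) - 1) * (1 - x) powr (b - 1)) / Beta a b"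
    proof -
      have "x powr (a - 1) * x = x powr a" if "x > 0"
        using that by (simp add: powr_add[symmetric] powr_diff)
      then show ?thesis using a by (auto simp: beta_density_def indicator_def)
    qed
  qed
  also have "\<dots> = (LINT x:{0..1}|lborel. (x powr ((a+1) - 1) * (1 - x) powr (b - 1))) / Beta a b"
    unfolding set_lebesgue_integral_def by simp
  also have "\<dots> = integral {0..1} (\<lambda>x. x powr ((a+1) - 1) * (1 - x) powr (b - 1)) / Beta a b"
    using integrable_Beta[of "a+1" b] a b by (simp add: set_borel_integral_eq_integral)
  also have "\<dots> = Beta (a+1) b / Beta a b"
    using has_integral_Beta_real[of "a+1" b] a b by (simp add: integral_unique)
  also have "\<dots> = a / (a + b)"
  proof -
    have "a \<notin> \<int>\<^sub>\<le>\<^sub>0" using a nonpos_Ints_nonpos by fastforce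
    from Beta_plus1_left[OF this, of b] have "(a + b) * Beta (a + 1) b = a * Beta a b" .
    then show ?thesis using a b B by (simp add: field_simps)
  qed
  finally show "integral\<^sup>L (density lborel (\<lambda>x. ennreal (beta_density a b x))) (\<lambda>x. x) = m"
    using ab by simp
qed
lemma law_F_props:
  assumes m: "0 < m" "m < 1" and v: "0 \<le> v" "v \<le> D m"
  shows "AE x in law_F m v. 0 \<le> x \<and> x \<le> 1" and "integral\<^sup>L (law_F m v) (\<lambda>x. x) = m"
proof -
  have "(AE x in law_F m v. 0 \<le> x \<and> x \<le> 1) \<and> integral\<^sup>L (law_F m v) (\<lambda>x. x) = m"
  proof (cases "v = 0")
    case True
    have L: "law_F m v = return borel m" using True by (simp add: law_F_def)
    have "AE x in return borel m. 0 \<le> x \<and> x \<le> 1" using m by (subst AE_return) auto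
    moreover have "integral\<^sup>L (return borel m) (\<lambda>x. x) = m" by (subst integral_return) auto
    ultimately show ?thesis unfolding L by blast
  next
    case v0: False
    show ?thesis
    proof (cases "v = D m")
      case True
      let ?h = "\<lambda>b::bool. if b then 1 else (0::real)"
      have L: "law_F m v = distr (measure_pmf (bernoulli_pmf m)) borel ?h"
        using True v0 by (simp add: law_F_def)
      have "AE x in distr (measure_pmf (bernoulli_pmf m)) borel ?h. 0 \<le> x \<and> x \<le> 1"
        by (subst AE_distr_iff) auto
      moreover have "integral\<^sup>L (distr (measure_pmf (bernoulli_pmf m)) borel ?h) (\<lambda>x. x) = m"
        apply (subst integral_distr)
          apply simp_all
        apply (subst integral_measure_pmf_real[where A=UNIV])
        using m by (auto simp: UNIV_bool)
      ultimately show ?thesis unfolding L by blast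
    next
      case False
      then have "0 < v" "v < D m" using v v0 by auto
      have L: "law_F m v = density lborel (\<lambda>x. ennreal (beta_density (beta_alpha m v) (beta_beta m v) x))"
        using v0 False by (simp add: law_F_def)
      show ?thesis unfolding L using beta_case[OF m \<open>0 < v\<close> \<open>v < D m\<close>] by blast
    qed
  qed
  then show "AE x in law_F m v. 0 \<le> x \<and> x \<le> 1" and "integral\<^sup>L (law_F m v) (\<lambda>x. x) = m"
    by auto
qed

lemma pw1:
  fixes lam r x :: real
  assumes "lam > 0" "0 < r" "r < 1" "0 \<le> x" "x \<le> 1"
  shows "- r + x * (r + (1 - r) * exp (- lam)) \<le> (x - r) * exp (- lam * x)"
proof -
  have e1: "exp (- lam * x) \<le> 1" using assms by simp
  have e2: "exp (- lam) \<le> exp (- lam * x)" using assms by (simp add: mult_left_le)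
  have "(x - r) * exp (- lam * x) - (- r + x * (r + (1 - r) * exp (- lam)))
      = x * (1 - r) * (exp (- lam * x) - exp (- lam)) + r * (1 - x) * (1 - exp (- lam * x))"
    by (simp add: algebra_simps)
  also have "\<dots> \<ge> 0" using assms e1 e2 by (intro add_nonneg_nonneg mult_nonneg_nonneg) auto
  finally show ?thesis by simp
qed

lemma pw2:
  fixes lam r x g :: real
  assumes "lam > 0" "g \<le> 1"
  shows "U lam (1 + r + g * (x - r)) \<le> U lam (1 + r + 1 * (x - r)) + (g - 1) * (lam * exp (- lam)) * ((x - r) * exp (- lam * x))"
proof -
  have eq: "- lam * (1 + r + g * (x - r)) = - lam * (1 + x) + lam * (1 - g) * (x - r)"
    by (simp add: algebra_simps)
  have "exp (- lam * (1 + x)) * (1 + lam * (1 - g) * (x - r)) \<le> exp (- lam * (1 + x)) * exp (lam * (1 - g) * (x - r))"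
    by (intro mult_left_mono exp_ge_add_one_self) auto
  also have "\<dots> = exp (- lam * (1 + r + g * (x - r)))" unfolding eq by (rule exp_add[symmetric])
  finally have *: "exp (- lam * (1 + x)) * (1 + lam * (1 - g) * (x - r)) \<le> exp (- lam * (1 + r + g * (x - r)))" .
  have e3: "- lam * (1 + x) = - lam + - lam * x" by (simp add: algebra_simps)
  have **: "exp (- lam * (1 + x)) = exp (- lam) * exp (- lam * x)"
    unfolding e3 by (rule exp_add)
  have e4: "1 + r + 1 * (x - r) = 1 + x" by simp
  define E where "E = exp (- lam) * exp (- lam * x)"
  define Y where "Y = exp (- lam * (1 + r + g * (x - r)))"
  define t where "t = lam * (1 - g) * (x - r)"
  have A: "E * (1 + t) \<le> Y" using * unfolding ** E_def Y_def t_def .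
  have B: "(g - 1) * (lam * exp (- lam)) * ((x - r) * exp (- lam * x)) = - (E * t)"
    unfolding E_def t_def by (simp add: algebra_simps)
  have "- Y \<le> - E + - (E * t)" using A by (simp add: algebra_simps)
  then show ?thesis unfolding U_def e4 ** B by (simp add: E_def Y_def)
qed

lemma mhat_ineq:
  fixes lam r m :: real
  assumes "lam > 0" "0 < r" "r < 1" "m_hat lam r \<le> m"
  shows "0 \<le> - r + m * (r + (1 - r) * exp (- lam))"
proof -
  have "0 < r * exp lam" using assms by simp
  then have den: "r * exp lam + 1 - r > 0" using assms by linarith
  have "r * exp lam \<le> m * (r * exp lam + 1 - r)" using assms(4) den by (simp add: m_hat_def divide_le_eq)
  hence "r * exp lam * exp (- lam) \<le> m * (r * exp lam + 1 - r) * exp (- lam)" by simp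
  moreover have "exp lam * exp (- lam) = 1" by (simp add: exp_minus)
  ultimately show ?thesis by (simp add: algebra_simps)
qed

theorem proposition8:
  fixes lam r m v :: real and M :: "'a measure" and X :: "'a \<Rightarrow> real"
  assumes "lam > 0" and "0 < r" and "r < 1"
    and "m_hat lam r \<le> m" and "m < 1"
    and "0 \<le> v" and "v \<le> D m"
    and "prob_space M" and "X \<in> borel_measurable M"
    and "distr M borel X = law_F m v"
  shows "\<forall>\<gamma>\<in>{0..1::real}.
           (\<integral>\<omega>. U lam (1 + r + \<gamma> * (X \<omega> - r)) \<partial>M)
             \<le> (\<integral>\<omega>. U lam (1 + r + 1 * (X \<omega> - r)) \<partial>M)"
proof
  fix g :: real assume g: "g \<in> {0..1}"
  interpret prob_space M by fact
  note Xm[measurable] = assms(9)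
  have mpos: "0 < m"
  proof -
    have "0 < r * exp lam" using assms by simp
    moreover have "r * exp lam + 1 - r > 0" using assms \<open>0 < r * exp lam\<close> by linarith
    ultimately have "0 < m_hat lam r" by (simp add: m_hat_def)
    then show ?thesis using assms(4) by linarith
  qed
  note LP = law_F_props[OF mpos assms(5,6,7)]
  have "AE x in distr M borel X. 0 \<le> x \<and> x \<le> 1" unfolding assms(10) by (rule LP(1))
  then have X01: "AE \<omega> in M. 0 \<le> X \<omega> \<and> X \<omega> \<le> 1" by (subst (asm) AE_distr_iff) auto
  have EX: "(\<integral>\<omega>. X \<omega> \<partial>M) = m"
  proof -
    have "(\<integral>\<omega>. X \<omega> \<partial>M) = integral\<^sup>L (distr M borel X) (\<lambda>x. x)"
      by (rule integral_distr[symmetric]) auto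
    also have "\<dots> = m" unfolding assms(10) by (rule LP(2))
    finally show ?thesis .
  qed
  define c where "c = r + (1 - r) * exp (- lam)"
  define K where "K = lam * exp (- lam)"
  have K: "K \<ge> 0" unfolding K_def using assms by simp
  define G where "G = (\<lambda>\<omega>. (X \<omega> - r) * exp (- lam * X \<omega>))"
  have intX: "integrable M X"
    by (rule integrable_const_bound[where B=1]) (use X01 in auto)
  have intG: "integrable M G"
  proof (rule integrable_const_bound[where B=1])
    show "AE x in M. norm (G x) \<le> 1"
      using X01
    proof eventually_elim
      case (elim x)
      have "\<bar>X x - r\<bar> \<le> 1" using elim assms by auto
      moreover have "exp (- lam * X x) \<le> 1" using elim assms by simp
      ultimately have "\<bar>X x - r\<bar> * exp (- lam * X x) \<le> 1 * 1"
        by (intro mult_mono) auto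
      then show ?case by (simp add: G_def abs_mult)
    qed
  qed (simp add: G_def)
  have intU: "integrable M (\<lambda>\<omega>. U lam (1 + r + h * (X \<omega> - r)))" if h: "h \<in> {0..1}" for h
  proof (rule integrable_const_bound[where B=1])
    show "AE x in M. norm (U lam (1 + r + h * (X x - r))) \<le> 1"
      using X01
    proof eventually_elim
      case (elim x)
      have "h * (X x - r) \<ge> h * (- r)" using elim h by (intro mult_left_mono) auto
      moreover have "h * r \<le> r" using h assms by (simp add: mult_left_le_one_le)
      ultimately have "1 + r + h * (X x - r) \<ge> 0" by linarith
      then have "exp (- lam * (1 + r + h * (X x - r))) \<le> 1" using assms by simp
      then show ?case by (simp add: U_def)
    qed
  qed (simp add: U_def)
  have "(\<integral>\<omega>. U lam (1 + r + g * (X \<omega> - r)) \<partial>M)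
      \<le> (\<integral>\<omega>. U lam (1 + r + 1 * (X \<omega> - r)) + (g - 1) * K * G \<omega> \<partial>M)"
    apply (rule integral_mono_AE)
    using intU[OF g] apply simp
    using intU[of 1] intG apply simp
    using pw2[OF assms(1)] g unfolding K_def G_def by auto
  also have "\<dots> = (\<integral>\<omega>. U lam (1 + r + 1 * (X \<omega> - r)) \<partial>M) + (g - 1) * K * (\<integral>\<omega>. G \<omega> \<partial>M)"
    using intU[of 1] intG by simp
  also have "\<dots> \<le> (\<integral>\<omega>. U lam (1 + r + 1 * (X \<omega> - r)) \<partial>M)"
  proof -
    have "(\<integral>\<omega>. - r + X \<omega> * c \<partial>M) \<le> (\<integral>\<omega>. G \<omega> \<partial>M)"
      apply (rule integral_mono_AE)
      using intX apply simp
      using intG apply simp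
      using X01 pw1[OF assms(1,2,3)] unfolding G_def c_def by auto
    moreover have "(\<integral>\<omega>. - r + X \<omega> * c \<partial>M) = - r + m * c"
      using intX EX by (simp add: prob_space)
    moreover have "0 \<le> - r + m * c" unfolding c_def using mhat_ineq[OF assms(1-4)] .
    ultimately have "0 \<le> (\<integral>\<omega>. G \<omega> \<partial>M)" by linarith
    moreover have "(g - 1) * K \<le> 0" using g K by (simp add: mult_nonpos_nonneg)
    ultimately have "(g - 1) * K * (\<integral>\<omega>. G \<omega> \<partial>M) \<le> 0" by (simp add: mult_nonpos_nonneg)
    then show ?thesis by simp
  qed
  finally show "(\<integral>\<omega>. U lam (1 + r + g * (X \<omega> - r)) \<partial>M)
             \<le> (\<integral>\<omega>. U lam (1 + r + 1 * (X \<omega> - r)) \<partial>M)" .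
qed

end
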